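(* Let $E\subset\mathbb{R}^2$ be a polygon with vertices $\mathbf{q}_1,\ldots,\mathbf{q}_n$, let $\gamma>0$ be a constant and $a^E(u,v)=\gamma\int_E\nabla u\cdot\nabla v\,\mathrm{d}\mathbf{x}$. Let $\mathcal{W}(E)$ be the space of functions $u:E\to\mathbb{R}$ that are affine on each edge of $E$ and satisfy $\Delta u=0$ in $E$. Let $\mathcal{W}_R(E)$ be the space of constant functions on $E$, $\mathcal{W}_C(E)=\{u \text{ affine on } E:\ \bar u=0\}$, and define, for $v\in\mathcal{W}(E)$, $\pi_Rv:=\bar v$ (a constant function), $\pi_Cv(\mathbf{x}):=\langle\nabla v\rangle\cdot(\mathbf{x}-\overline{\mathbf{q}})$ and $\pi_{\mathcal P}v:=\pi_Cv+\pi_Rv$. Then: (i) for all $r\in\mathcal{W}_R(E)$, $c\in\mathcal{W}_C(E)$ and $v\in\mathcal{W}(E)$, $a^E(r,v)=0$ and $a^E(c,v-\pi_Cv)=0$; (ii) for all $u,v\in\mathcal{W}(E)$, $a^E(u,v)=a^E(\pi_Cu,\pi_Cv)+a^E(u-\pi_{\mathcal P}u,\,v-\pi_{\mathcal P}v)$.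
   Context: For a continuous function $v$ on $E$, $\bar v=\frac1n\sum_{j=1}^n v(\mathbf{q}_j)$ is the average of its values at the vertices; $\overline{\mathbf{q}}=\frac1n\sum_j\mathbf{q}_j$; for an integrable (possibly vector-valued) function $w$, $\langle w\rangle=\frac{1}{|E|}\int_Ew\,\mathrm{d}\mathbf{x}$. *)

theory Defs
  imports "HOL-Analysis.Analysis"
begin

type_synonym pt = "real ^ 2"

definition pedge :: "(nat \<Rightarrow> pt) \<Rightarrow> nat \<Rightarrow> nat \<Rightarrow> pt set" where
  "pedge q n i = closed_segment (q i) (q (Suc i mod n))"

definition pboundary :: "(nat \<Rightarrow> pt) \<Rightarrow> nat \<Rightarrow> pt set" where
  "pboundary q n = (\<Union>i<n. pedge q n i)"

text \<open>Simple polygon: at least 3 distinct vertices, no three consecutive vertices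
  collinear (so each q i is a genuine vertex), and edges meet only at the
  common vertex of consecutive edges.\<close>
definition is_polygon :: "(nat \<Rightarrow> pt) \<Rightarrow> nat \<Rightarrow> bool" where
  "is_polygon q n \<longleftrightarrow> n \<ge> 3 \<and> inj_on q {..<n} \<and>
     (\<forall>i<n. \<not> collinear {q i, q (Suc i mod n), q (Suc (Suc i) mod n)}) \<and>
     (\<forall>i<n. \<forall>j<n. i \<noteq> j \<longrightarrow>
        pedge q n i \<inter> pedge q n j =
          (if j = Suc i mod n then {q j} else if i = Suc j mod n then {q i} else {}))"

definition pregion :: "(nat \<Rightarrow> pt) \<Rightarrow> nat \<Rightarrow> pt set" where
  "pregion q n = pboundary q n \<union> inside (pboundary q n)"

text \<open>Gradient of a scalar function at a point (meaningful where it is differentiable).\<close>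
definition grad :: "(pt \<Rightarrow> real) \<Rightarrow> pt \<Rightarrow> pt" where
  "grad u x = (SOME g. (u has_derivative (\<lambda>h. g \<bullet> h)) (at x))"

definition laplacian :: "(pt \<Rightarrow> real) \<Rightarrow> pt \<Rightarrow> real" where
  "laplacian u x = (\<Sum>i\<in>UNIV. grad (\<lambda>y. grad u y $ i) x $ i)"

definition vavg :: "(nat \<Rightarrow> pt) \<Rightarrow> nat \<Rightarrow> (pt \<Rightarrow> real) \<Rightarrow> real" where
  "vavg q n v = (\<Sum>j<n. v (q j)) / real n"

definition qbar :: "(nat \<Rightarrow> pt) \<Rightarrow> nat \<Rightarrow> pt" where
  "qbar q n = (1 / real n) *\<^sub>R (\<Sum>j<n. q j)"

definition ravg :: "pt set \<Rightarrow> (pt \<Rightarrow> 'b::euclidean_space) \<Rightarrow> 'b" where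
  "ravg E w = (1 / measure lebesgue E) *\<^sub>R integral E w"

definition aE :: "real \<Rightarrow> pt set \<Rightarrow> (pt \<Rightarrow> real) \<Rightarrow> (pt \<Rightarrow> real) \<Rightarrow> real" where
  "aE \<gamma> E u v = \<gamma> * integral E (\<lambda>x. grad u x \<bullet> grad v x)"

text \<open>The space W(E) (a subspace of H^1(E)): continuous on E, affine on every edge,
  harmonic in the interior, with square-integrable gradient.\<close>
definition Wspace :: "(nat \<Rightarrow> pt) \<Rightarrow> nat \<Rightarrow> (pt \<Rightarrow> real) \<Rightarrow> bool" where
  "Wspace q n u \<longleftrightarrow>
     continuous_on (pregion q n) u \<and>
     (\<forall>i<n. \<exists>a b. \<forall>x\<in>pedge q n i. u x = a \<bullet> x + b) \<and>
     (\<forall>x\<in>interior (pregion q n).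
        u differentiable (at x) \<and>
        (\<forall>i. (\<lambda>y. grad u y $ i) differentiable (at x)) \<and>
        laplacian u x = 0) \<and>
     (\<lambda>x. grad u x) absolutely_integrable_on pregion q n \<and>
     (\<lambda>x. (norm (grad u x))\<^sup>2) integrable_on pregion q n"

definition WRspace :: "(nat \<Rightarrow> pt) \<Rightarrow> nat \<Rightarrow> (pt \<Rightarrow> real) \<Rightarrow> bool" where
  "WRspace q n r \<longleftrightarrow> (\<exists>c. \<forall>x\<in>pregion q n. r x = c)"

definition WCspace :: "(nat \<Rightarrow> pt) \<Rightarrow> nat \<Rightarrow> (pt \<Rightarrow> real) \<Rightarrow> bool" where
  "WCspace q n c \<longleftrightarrow> (\<exists>a b. \<forall>x\<in>pregion q n. c x = a \<bullet> x + b) \<and> vavg q n c = 0"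

definition piR :: "(nat \<Rightarrow> pt) \<Rightarrow> nat \<Rightarrow> (pt \<Rightarrow> real) \<Rightarrow> pt \<Rightarrow> real" where
  "piR q n v = (\<lambda>x. vavg q n v)"

definition piC :: "(nat \<Rightarrow> pt) \<Rightarrow> nat \<Rightarrow> (pt \<Rightarrow> real) \<Rightarrow> pt \<Rightarrow> real" where
  "piC q n v = (\<lambda>x. ravg (pregion q n) (grad v) \<bullet> (x - qbar q n))"

definition piP :: "(nat \<Rightarrow> pt) \<Rightarrow> nat \<Rightarrow> (pt \<Rightarrow> real) \<Rightarrow> pt \<Rightarrow> real" where
  "piP q n v = (\<lambda>x. piC q n v x + piR q n v x)"

end

theory Submission
  imports Defs
begin

lemma grad_eq:
  assumes "(f has_derivative (\<lambda>h. g \<bullet> h)) (at x)"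
  shows "grad f x = g"
proof -
  have ex: "\<exists>g. (f has_derivative (\<lambda>h. g \<bullet> h)) (at x)" using assms by blast
  have d: "(f has_derivative (\<lambda>h. grad f x \<bullet> h)) (at x)"
    unfolding grad_def by (rule someI_ex[OF ex])
  have "(\<lambda>h. grad f x \<bullet> h) = (\<lambda>h. g \<bullet> h)"
    by (rule has_derivative_unique[OF d assms])
  then have "grad f x \<bullet> (grad f x - g) = g \<bullet> (grad f x - g)" by metis
  then have "(grad f x - g) \<bullet> (grad f x - g) = 0" by (simp add: inner_diff_left)
  then show ?thesis by simp
qed

lemma grad_has:
  assumes "f differentiable (at x)"
  shows "(f has_derivative (\<lambda>h. grad f x \<bullet> h)) (at x)"
proof -
  obtain D where D: "(f has_derivative D) (at x)" using assms differentiable_def by blast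
  have lin: "linear D" using D has_derivative_linear by blast
  have "D = (\<lambda>h. adjoint D 1 \<bullet> h)"
  proof
    fix h
    have "D h = D h \<bullet> 1" by simp
    also have "\<dots> = h \<bullet> adjoint D 1" using adjoint_works[OF lin] by metis
    finally show "D h = adjoint D 1 \<bullet> h" by (simp add: inner_commute)
  qed
  with D have "(f has_derivative (\<lambda>h. adjoint D 1 \<bullet> h)) (at x)" by simp
  with grad_eq[OF this] show ?thesis by simp
qed

lemma grad_local:
  assumes "open S" "x \<in> S" "\<And>y. y \<in> S \<Longrightarrow> f y = a \<bullet> y + b"
  shows "grad f x = a"
proof (rule grad_eq)
  have "((\<lambda>y. a \<bullet> y + b) has_derivative (\<lambda>h. a \<bullet> h)) (at x)"
    by (auto intro!: derivative_eq_intros)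
  then show "(f has_derivative (\<lambda>h. a \<bullet> h)) (at x)"
    by (rule has_derivative_transform_within_open[OF _ assms(1,2)]) (use assms(3) in auto)
qed

lemma grad_minus_affine:
  assumes "f differentiable (at x)"
  shows "grad (\<lambda>y. f y - (m \<bullet> (y - p) + c)) x = grad f x - m"
proof (rule grad_eq)
  have "((\<lambda>y. f y - (m \<bullet> (y - p) + c)) has_derivative (\<lambda>h. grad f x \<bullet> h - (m \<bullet> h))) (at x)"
    using grad_has[OF assms] by (auto intro!: derivative_eq_intros)
  then show "((\<lambda>y. f y - (m \<bullet> (y - p) + c)) has_derivative (\<lambda>h. (grad f x - m) \<bullet> h)) (at x)"
    by (simp add: inner_diff_left)
qed

lemma negligible_pboundary: "negligible (pboundary q n)"
  unfolding pboundary_def pedge_def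
proof (rule negligible_Union)
  show "finite ((\<lambda>i. closed_segment (q i) (q (Suc i mod n))) ` {..<n})" by simp
next
  fix T assume "T \<in> (\<lambda>i. closed_segment (q i) (q (Suc i mod n))) ` {..<n}"
  then obtain i where T: "T = closed_segment (q i) (q (Suc i mod n))" by blast
  have "interior T = {}" unfolding T by (rule interior_closed_segment_ge2) simp
  then show "negligible T" using negligible_convex_interior[of T] T by simp
qed

lemma compact_pboundary: "compact (pboundary q n)"
  unfolding pboundary_def pedge_def
  by (intro compact_UN) (auto simp: compact_segment)


lemma integral_inner_const:
  fixes g :: "'a::euclidean_space \<Rightarrow> 'b::euclidean_space"
  assumes "g integrable_on E"
  shows "integral E (\<lambda>x. a \<bullet> g x) = a \<bullet> integral E g"
  using integral_linear[OF assms bounded_linear_inner_right[of a]] by (simp add: o_def)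

lemma integral_const_lm:
  assumes "E \<in> lmeasurable"
  shows "integral E (\<lambda>x. k::real) = k * measure lebesgue E"
proof -
  have "integral E (\<lambda>x. k) = integral E (\<lambda>x. k *\<^sub>R (1::real))" by simp
  also have "\<dots> = k * integral E (\<lambda>x. 1::real)" by (simp only: integral_cmul) simp
  finally show ?thesis using lmeasure_integral[OF assms] by simp
qed

lemma inner_int:
  fixes gu gv :: "'a::euclidean_space \<Rightarrow> 'b::euclidean_space"
  assumes E: "E \<in> lmeasurable" and "gu absolutely_integrable_on E" "gv absolutely_integrable_on E"
    and "(\<lambda>x. (norm (gu x))\<^sup>2) integrable_on E" "(\<lambda>x. (norm (gv x))\<^sup>2) integrable_on E"
  shows "(\<lambda>x. gu x \<bullet> gv x) integrable_on E"
proof (rule measurable_bounded_by_integrable_imp_integrable)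
  have SE: "E \<in> sets lebesgue" using E by (simp add: fmeasurableD)
  show "E \<in> sets lebesgue" by (fact SE)
  have "gu \<in> borel_measurable (lebesgue_on E)" "gv \<in> borel_measurable (lebesgue_on E)"
    using absolutely_integrable_imp_borel_measurable SE assms by blast+
  then show "(\<lambda>x. gu x \<bullet> gv x) \<in> borel_measurable (lebesgue_on E)"
    by (rule borel_measurable_inner)
  show "(\<lambda>x. ((norm (gu x))\<^sup>2 + (norm (gv x))\<^sup>2) / 2) integrable_on E"
    using assms by (intro integrable_on_divide integrable_add)
  fix x
  have "norm (gu x \<bullet> gv x) \<le> norm (gu x) * norm (gv x)"
    using Cauchy_Schwarz_ineq2 by simp
  moreover have "norm (gu x) * norm (gv x) \<le> ((norm (gu x))\<^sup>2 + (norm (gv x))\<^sup>2) / 2"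
    using sum_squares_bound[of "norm (gu x)" "norm (gv x)"] by (simp add: power2_eq_square)
  ultimately show "norm (gu x \<bullet> gv x) \<le> ((norm (gu x))\<^sup>2 + (norm (gv x))\<^sup>2) / 2" by linarith
qed

theorem lemma5p1:
  fixes q :: "nat \<Rightarrow> real ^ 2" and n :: nat and \<gamma> :: real
  assumes "is_polygon q n" and "\<gamma> > 0"
  defines "E \<equiv> pregion q n"
  shows "(\<forall>r c v. WRspace q n r \<longrightarrow> WCspace q n c \<longrightarrow> Wspace q n v \<longrightarrow>
            aE \<gamma> E r v = 0 \<and> aE \<gamma> E c (\<lambda>x. v x - piC q n v x) = 0)
       \<and> (\<forall>u v. Wspace q n u \<longrightarrow> Wspace q n v \<longrightarrow>
            aE \<gamma> E u v = aE \<gamma> E (piC q n u) (piC q n v)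
              + aE \<gamma> E (\<lambda>x. u x - piP q n u x) (\<lambda>x. v x - piP q n v x))"
proof -
  define B where "B = pboundary q n"
  define S where "S = inside B"
  have E_eq: "E = B \<union> S" unfolding E_def B_def S_def pregion_def by simp
  have negB: "negligible B" unfolding B_def by (rule negligible_pboundary)
  have cB: "compact B" unfolding B_def by (rule compact_pboundary)
  have closedB: "closed B" using cB compact_imp_closed by blast
  have openS: "open S" unfolding S_def using open_inside[OF closedB] .
  have bS: "bounded S" unfolding S_def using bounded_inside compact_imp_bounded[OF cB] by blast
  have S_int: "S \<subseteq> interior E" using openS E_eq by (simp add: interior_maximal)
  have "closure S \<subseteq> E" using closure_Un_frontier[of S] frontier_inside_subset[OF closedB] E_eq
    unfolding S_def by auto
  then have "closure E \<subseteq> E" using E_eq closedB by (simp add: closure_Un)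
  then have "closed E" using closure_subset_eq by blast
  moreover have "bounded E" using E_eq bS compact_imp_bounded[OF cB] by simp
  ultimately have "compact E" by (simp add: compact_eq_bounded_closed)
  then have lmE: "E \<in> lmeasurable" by (rule lmeasurable_compact)
  have spike: "integral E f = integral E g" if "\<And>x. x \<in> S \<Longrightarrow> f x = g x" for f g :: "pt \<Rightarrow> real"
    by (rule integral_spike[OF negB]) (use that E_eq in auto)
  define \<mu> where "\<mu> = measure lebesgue E"
  have Wd: "u differentiable (at x)" if "Wspace q n u" "x \<in> S" for u x
    using that S_int unfolding Wspace_def E_def by blast
  have Wai: "grad u absolutely_integrable_on E" if "Wspace q n u" for u
    using that unfolding Wspace_def E_def by blast
  have Wi: "grad u integrable_on E" if "Wspace q n u" for u
    using Wai[OF that] absolutely_integrable_on_def by blast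
  have Wsq: "(\<lambda>x. (norm (grad u x))\<^sup>2) integrable_on E" if "Wspace q n u" for u
    using that unfolding Wspace_def E_def by blast
  define m where "m u = ravg E (grad u)" for u
  have piC_eq: "piC q n u = (\<lambda>y. m u \<bullet> (y - qbar q n))" for u
    unfolding piC_def m_def E_def by simp
  have gpiC: "grad (piC q n u) x = m u" if "x \<in> S" for u x
    by (rule grad_local[OF openS that, of _ _ "- (m u \<bullet> qbar q n)"]) (simp add: piC_eq inner_diff_right)
  have gdC: "grad (\<lambda>x. v x - piC q n v x) x = grad v x - m v" if "Wspace q n v" "x \<in> S" for v x
  proof -
    have "(\<lambda>x. v x - piC q n v x) = (\<lambda>y. v y - (m v \<bullet> (y - qbar q n) + 0))" by (simp add: piC_eq)
    then show ?thesis using grad_minus_affine[OF Wd[OF that], of "m v" "qbar q n" 0] by simp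
  qed
  have gdP: "grad (\<lambda>x. v x - piP q n v x) x = grad v x - m v" if "Wspace q n v" "x \<in> S" for v x
  proof -
    have "(\<lambda>x. v x - piP q n v x) = (\<lambda>y. v y - (m v \<bullet> (y - qbar q n) + vavg q n v))"
      by (simp add: piC_eq piP_def piR_def)
    then show ?thesis using grad_minus_affine[OF Wd[OF that]] by simp
  qed
  show ?thesis
  proof (cases "\<mu> = 0")
    case True
    then have "negligible E" using negligible_iff_measure0[OF lmE] unfolding \<mu>_def by simp
    then have "integral E f = 0" for f :: "pt \<Rightarrow> real"
      using integral_spike[of E E "\<lambda>x. 0" f] by simp
    then show ?thesis unfolding aE_def by simp
  next
    case False
    have Ig: "integral E (grad u) = \<mu> *\<^sub>R m u" for u
      using False unfolding m_def ravg_def \<mu>_def by simp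
    have cint: "integral E (\<lambda>x. k::real) = k * \<mu>" for k
      using integral_const_lm[OF lmE] \<mu>_def by simp
    have P1: "aE \<gamma> E r v = 0 \<and> aE \<gamma> E c (\<lambda>x. v x - piC q n v x) = 0"
      if R: "WRspace q n r" and C: "WCspace q n c" and V: "Wspace q n v" for r c v
    proof
      obtain k where k: "\<forall>x\<in>E. r x = k" using R unfolding WRspace_def E_def by blast
      have "grad r x = 0" if "x \<in> S" for x
        by (rule grad_local[OF openS that, of _ 0 k]) (use k E_eq in auto)
      then have "integral E (\<lambda>x. grad r x \<bullet> grad v x) = integral E (\<lambda>x. 0)"
        by (intro spike) simp
      then show "aE \<gamma> E r v = 0" unfolding aE_def by simp
    next
      obtain a b where ab: "\<forall>x\<in>E. c x = a \<bullet> x + b" using C unfolding WCspace_def E_def by blast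
      have "grad c x = a" if "x \<in> S" for x
        by (rule grad_local[OF openS that]) (use ab E_eq in auto)
      then have "integral E (\<lambda>x. grad c x \<bullet> grad (\<lambda>x. v x - piC q n v x) x)
          = integral E (\<lambda>x. a \<bullet> grad v x - a \<bullet> m v)"
        using gdC[OF V] by (intro spike) (simp add: inner_diff_right)
      also have "\<dots> = integral E (\<lambda>x. a \<bullet> grad v x) - integral E (\<lambda>x. a \<bullet> m v)"
        by (rule integral_diff)
          (use integrable_linear[OF Wi[OF V] bounded_linear_inner_right[of a]] integrable_on_const[OF lmE] in \<open>simp_all add: o_def\<close>)
      also have "\<dots> = 0"
        using integral_inner_const[OF Wi[OF V], of a] Ig[of v] cint by simp
      finally show "aE \<gamma> E c (\<lambda>x. v x - piC q n v x) = 0" unfolding aE_def by simp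
    qed
    have P2: "aE \<gamma> E u v = aE \<gamma> E (piC q n u) (piC q n v)
              + aE \<gamma> E (\<lambda>x. u x - piP q n u x) (\<lambda>x. v x - piP q n v x)"
      if U: "Wspace q n u" and V: "Wspace q n v" for u v
    proof -
      have iuv: "(\<lambda>x. grad u x \<bullet> grad v x) integrable_on E"
        by (rule inner_int[OF lmE Wai[OF U] Wai[OF V] Wsq[OF U] Wsq[OF V]])
      have iu: "(\<lambda>x. m v \<bullet> grad u x) integrable_on E" and iv: "(\<lambda>x. m u \<bullet> grad v x) integrable_on E"
        using integrable_linear[OF Wi[OF U] bounded_linear_inner_right[of "m v"]]
          integrable_linear[OF Wi[OF V] bounded_linear_inner_right[of "m u"]] by (simp_all add: o_def)
      have ic: "(\<lambda>x. k) integrable_on E" for k :: real by (rule integrable_on_const[OF lmE])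
      have I1: "integral E (\<lambda>x. grad (piC q n u) x \<bullet> grad (piC q n v) x) = (m u \<bullet> m v) * \<mu>"
      proof -
        have "integral E (\<lambda>x. grad (piC q n u) x \<bullet> grad (piC q n v) x) = integral E (\<lambda>x. m u \<bullet> m v)"
          by (rule spike) (simp add: gpiC)
        then show ?thesis using cint[of "m u \<bullet> m v"] by simp
      qed
      have "integral E (\<lambda>x. grad (\<lambda>x. u x - piP q n u x) x \<bullet> grad (\<lambda>x. v x - piP q n v x) x)
          = integral E (\<lambda>x. (grad u x \<bullet> grad v x - m v \<bullet> grad u x) - (m u \<bullet> grad v x - m u \<bullet> m v))"
        by (rule spike) (simp add: gdP[OF U] gdP[OF V] inner_diff_left inner_diff_right inner_commute)
      also have "\<dots> = (integral E (\<lambda>x. grad u x \<bullet> grad v x) - integral E (\<lambda>x. m v \<bullet> grad u x))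
            - (integral E (\<lambda>x. m u \<bullet> grad v x) - integral E (\<lambda>x. m u \<bullet> m v))"
        using integral_diff[OF integrable_diff[OF iuv iu] integrable_diff[OF iv ic]]
          integral_diff[OF iuv iu] integral_diff[OF iv ic] by simp
      also have "\<dots> = integral E (\<lambda>x. grad u x \<bullet> grad v x) - (m u \<bullet> m v) * \<mu>"
        using integral_inner_const[OF Wi[OF U], of "m v"] integral_inner_const[OF Wi[OF V], of "m u"]
          Ig[of u] Ig[of v] cint[of "m u \<bullet> m v"] by (simp add: inner_commute)
      finally have J: "integral E (\<lambda>x. grad (\<lambda>x. u x - piP q n u x) x \<bullet> grad (\<lambda>x. v x - piP q n v x) x)
          = integral E (\<lambda>x. grad u x \<bullet> grad v x) - (m u \<bullet> m v) * \<mu>" .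
      show ?thesis unfolding aE_def I1 J by (simp add: algebra_simps)
    qed
    show ?thesis using P1 P2 by blast
  qed
qed

end
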